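(* Let $r,s,t,a,b,c$ be real numbers with $t\neq0$, and let $M_{H,n}^{(3)}$, $M_{h,n}^{(3)}$ be the matrix sequences defined in the context (with $M_{h,n}^{(3)}$ extended to negative indices as described there). Then for every nonnegative integer $n$: $$M_{H,n}^{(3)}=bM_{h,n}^{(3)}+(c-rb)M_{h,n-1}^{(3)}+taM_{h,n-2}^{(3)},$$ $$M_{H,n}^{(3)}=aM_{h,n+1}^{(3)}+(b-ra)M_{h,n}^{(3)}+(c-rb-sa)M_{h,n-1}^{(3)}.$$
   Context: The third-order Horadam matrix sequence is the sequence of $3\times3$ matrices defined by $M_{H,n+3}^{(3)}=rM_{H,n+2}^{(3)}+sM_{H,n+1}^{(3)}+tM_{H,n}^{(3)}$ ($n\ge0$) with $M_{H,0}^{(3)}=\begin{pmatrix} b & c-rb & ta\\ a & b-ra & c-rb-sa\\ \frac{1}{t}(c-rb-sa) & a-\frac{r}{t}(c-rb-sa) & \frac1t\big(-sc+(t+rs)b+(s^2-rt)a\big)\end{pmatrix}$, $M_{H,1}^{(3)}=\begin{pmatrix} c & sb+ta & tb\\ b & c-rb & ta\\ a & b-ra & c-rb-sa\end{pmatrix}$, $M_{H,2}^{(3)}=\begin{pmatrix} rc+sb+ta & sc+tb & tc\\ c & sb+ta & tb\\ b & c-rb & ta\end{pmatrix}$. The generalized Tribonacci matrix sequence satisfies the same recurrence with $M_{h,0}^{(3)}=I_3$, $M_{h,1}^{(3)}=\begin{pmatrix} r&s&t\\1&0&0\\0&1&0\end{pmatrix}$, $M_{h,2}^{(3)}=\begin{pmatrix}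 r^2+s&rs+t&rt\\ r&s&t\\ 1&0&0\end{pmatrix}$; it is extended to negative indices by running the recurrence backwards, $M_{h,k}^{(3)}=\frac1t\big(M_{h,k+3}^{(3)}-rM_{h,k+2}^{(3)}-sM_{h,k+1}^{(3)}\big)$ for $k<0$. *)

theory Defs
  imports "HOL-Analysis.Analysis"
begin

type_synonym mat3 = "real^3^3"

definition mat3 :: "real \<Rightarrow> real \<Rightarrow> real \<Rightarrow> real \<Rightarrow> real \<Rightarrow> real \<Rightarrow> real \<Rightarrow> real \<Rightarrow> real \<Rightarrow> mat3" where
  "mat3 x11 x12 x13 x21 x22 x23 x31 x32 x33 =
     vector [vector [x11, x12, x13], vector [x21, x22, x23], vector [x31, x32, x33]]"

fun Mh_nat :: "real \<Rightarrow> real \<Rightarrow> real \<Rightarrow> nat \<Rightarrow> mat3" where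
  "Mh_nat r s t 0 = mat 1"
| "Mh_nat r s t (Suc 0) = mat3 r s t 1 0 0 0 1 0"
| "Mh_nat r s t (Suc (Suc 0)) = mat3 (r^2 + s) (r* s + t) (r*t) r s t 1 0 0"
| "Mh_nat r s t (Suc (Suc (Suc n))) =
     r *\<^sub>R Mh_nat r s t (Suc (Suc n)) + s *\<^sub>R Mh_nat r s t (Suc n) + t *\<^sub>R Mh_nat r s t n"

text \<open>Mh_neg r s t m is the matrix with index -m, obtained by running the recurrence backwards.\<close>
fun Mh_neg :: "real \<Rightarrow> real \<Rightarrow> real \<Rightarrow> nat \<Rightarrow> mat3" where
  "Mh_neg r s t 0 = mat 1"
| "Mh_neg r s t (Suc 0) =
     (1/t) *\<^sub>R (Mh_nat r s t 2 - r *\<^sub>R Mh_nat r s t 1 - s *\<^sub>R Mh_nat r s t 0)"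
| "Mh_neg r s t (Suc (Suc 0)) =
     (1/t) *\<^sub>R (Mh_nat r s t 1 - r *\<^sub>R Mh_nat r s t 0 - s *\<^sub>R Mh_neg r s t 1)"
| "Mh_neg r s t (Suc (Suc (Suc m))) =
     (1/t) *\<^sub>R (Mh_neg r s t m - r *\<^sub>R Mh_neg r s t (Suc m) - s *\<^sub>R Mh_neg r s t (Suc (Suc m)))"

definition Mh :: "real \<Rightarrow> real \<Rightarrow> real \<Rightarrow> int \<Rightarrow> mat3" where
  "Mh r s t k = (if k \<ge> 0 then Mh_nat r s t (nat k) else Mh_neg r s t (nat (- k)))"

fun MH :: "real \<Rightarrow> real \<Rightarrow> real \<Rightarrow> real \<Rightarrow> real \<Rightarrow> real \<Rightarrow> nat \<Rightarrow> mat3" where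
  "MH r s t a b c 0 =
     mat3 b (c - r*b) (t*a)
          a (b - r*a) (c - r*b - s*a)
          ((1/t) * (c - r*b - s*a)) (a - (r/t) * (c - r*b - s*a))
          ((1/t) * (- s*c + (t + r* s)*b + (s^2 - r*t)*a))"
| "MH r s t a b c (Suc 0) =
     mat3 c (s*b + t*a) (t*b)
          b (c - r*b) (t*a)
          a (b - r*a) (c - r*b - s*a)"
| "MH r s t a b c (Suc (Suc 0)) =
     mat3 (r*c + s*b + t*a) (s*c + t*b) (t*c)
          c (s*b + t*a) (t*b)
          b (c - r*b) (t*a)"
| "MH r s t a b c (Suc (Suc (Suc n))) =
     r *\<^sub>R MH r s t a b c (Suc (Suc n)) + s *\<^sub>R MH r s t a b c (Suc n) + t *\<^sub>R MH r s t a b c n"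

end

theory Submission
  imports Defs
begin

lemma G: "(t::real) \<noteq> 0 \<Longrightarrow> Y = (1/t) *\<^sub>R (A - r *\<^sub>R B - s *\<^sub>R C) \<Longrightarrow> (A::'a::real_vector) = r *\<^sub>R B + s *\<^sub>R C + t *\<^sub>R Y"
  by simp

lemma Mh_rec:
  assumes "t \<noteq> 0"
  shows "Mh r s t (k+3) = r *\<^sub>R Mh r s t (k+2) + s *\<^sub>R Mh r s t (k+1) + t *\<^sub>R Mh r s t k"
proof (cases "k \<ge> 0")
  case True
  then obtain m where m: "k = int m" by (metis nonneg_int_cases)
  have e: "nat (int m + 3) = Suc (Suc (Suc m))" "nat (int m + 2) = Suc (Suc m)" "nat (int m + 1) = Suc m" by auto
  show ?thesis unfolding Mh_def m using e by simp
next
  case False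
  define m where "m = nat (- k) - 1"
  have m: "k = - int (Suc m)" using False unfolding m_def by simp
  consider "m = 0" | "m = 1" | m' where "m = Suc (Suc m')" by (metis One_nat_def not0_implies_Suc)
  then show ?thesis
  proof cases
    case 1
    have h: "Mh r s t (k+3) = Mh_nat r s t 2" "Mh r s t (k+2) = Mh_nat r s t 1" "Mh r s t (k+1) = Mh_nat r s t 0"
      "Mh r s t k = Mh_neg r s t 1" using m 1 by (simp_all add: Mh_def del: Mh_nat.simps Mh_neg.simps)
    have d: "Mh_neg r s t 1 = (1/t) *\<^sub>R (Mh_nat r s t 2 - r *\<^sub>R Mh_nat r s t 1 - s *\<^sub>R Mh_nat r s t 0)"
      by (simp del: Mh_nat.simps)
    show ?thesis unfolding h by (rule G[OF assms d])
  next
    case 2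
    have h: "Mh r s t (k+3) = Mh_nat r s t 1" "Mh r s t (k+2) = Mh_nat r s t 0" "Mh r s t (k+1) = Mh_neg r s t 1"
      "Mh r s t k = Mh_neg r s t 2" using m 2 by (simp_all add: Mh_def del: Mh_nat.simps Mh_neg.simps)
    have d: "Mh_neg r s t 2 = (1/t) *\<^sub>R (Mh_nat r s t 1 - r *\<^sub>R Mh_nat r s t 0 - s *\<^sub>R Mh_neg r s t 1)"
      by (simp add: numeral_2_eq_2 del: Mh_nat.simps)
    show ?thesis unfolding h by (rule G[OF assms d])
  next
    case 3
    have h: "Mh r s t (k+3) = Mh_neg r s t m'" "Mh r s t (k+2) = Mh_neg r s t (Suc m')" "Mh r s t (k+1) = Mh_neg r s t (Suc (Suc m'))"
      "Mh r s t k = Mh_neg r s t (Suc (Suc (Suc m')))" 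
    proof -
      have k: "k = - int (Suc (Suc (Suc m')))" using m 3 by simp
      show "Mh r s t (k+3) = Mh_neg r s t m'"
        by (cases m') (simp_all add: k Mh_def nat_add_distrib del: Mh_neg.simps(2-4))
      show "Mh r s t (k+2) = Mh_neg r s t (Suc m')" "Mh r s t (k+1) = Mh_neg r s t (Suc (Suc m'))"
        "Mh r s t k = Mh_neg r s t (Suc (Suc (Suc m')))"
        by (simp_all add: k Mh_def nat_add_distrib numeral_3_eq_3 del: Mh_neg.simps(2-4))
    qed
    show ?thesis unfolding h by (rule G[OF assms Mh_neg.simps(4)])
  qed
qed

lemma L1: "(M::'a::real_vector) = r *\<^sub>R (b *\<^sub>R X2 + q *\<^sub>R X1 + u *\<^sub>R X0) + s *\<^sub>R (b *\<^sub>R X1 + q *\<^sub>R X0 + u *\<^sub>R Y1) + t *\<^sub>R (b *\<^sub>R X0 + q *\<^sub>R Y1 + u *\<^sub>R Y2)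
 \<Longrightarrow> M = b *\<^sub>R (r *\<^sub>R X2 + s *\<^sub>R X1 + t *\<^sub>R X0)
       + q *\<^sub>R (r *\<^sub>R X1 + s *\<^sub>R X0 + t *\<^sub>R Y1) + u *\<^sub>R (r *\<^sub>R X0 + s *\<^sub>R Y1 + t *\<^sub>R Y2)"
  by (simp add: algebra_simps)

lemma m3eq: "(x::real^3^3) = y \<longleftrightarrow> (\<forall>i j. x$i$j = y$i$j)"
  by (simp add: vec_eq_iff)
lemma mat3_add: "mat3 a1 a2 a3 a4 a5 a6 a7 a8 a9 + mat3 b1 b2 b3 b4 b5 b6 b7 b8 b9 =
  mat3 (a1+b1) (a2+b2) (a3+b3) (a4+b4) (a5+b5) (a6+b6) (a7+b7) (a8+b8) (a9+b9)"
  by (simp add: m3eq forall_3 mat3_def)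
lemma mat3_diff: "mat3 a1 a2 a3 a4 a5 a6 a7 a8 a9 - mat3 b1 b2 b3 b4 b5 b6 b7 b8 b9 =
  mat3 (a1-b1) (a2-b2) (a3-b3) (a4-b4) (a5-b5) (a6-b6) (a7-b7) (a8-b8) (a9-b9)"
  by (simp add: m3eq forall_3 mat3_def)
lemma mat3_scale: "c *\<^sub>R mat3 a1 a2 a3 a4 a5 a6 a7 a8 a9 =
  mat3 (c*a1) (c*a2) (c*a3) (c*a4) (c*a5) (c*a6) (c*a7) (c*a8) (c*a9)"
  by (simp add: m3eq forall_3 mat3_def)
lemma mat3_eq: "mat3 a1 a2 a3 a4 a5 a6 a7 a8 a9 = mat3 b1 b2 b3 b4 b5 b6 b7 b8 b9 \<longleftrightarrow>
  a1=b1 \<and> a2=b2 \<and> a3=b3 \<and> a4=b4 \<and> a5=b5 \<and> a6=b6 \<and> a7=b7 \<and> a8=b8 \<and> a9=b9"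
  by (simp add: m3eq forall_3 mat3_def)
lemma mat3_one: "(mat 1 :: real^3^3) = mat3 1 0 0 0 1 0 0 0 1"
  by (simp add: m3eq forall_3 mat3_def mat_def)

lemma Mh_vals:
  assumes "t \<noteq> 0"
  shows "Mh r s t 0 = mat3 1 0 0 0 1 0 0 0 1"
    "Mh r s t 1 = mat3 r s t 1 0 0 0 1 0"
    "Mh r s t 2 = mat3 (r^2 + s) (r* s + t) (r* t) r s t 1 0 0"
    "Mh r s t 3 = mat3 (r^3+2* r* s+t) (r^2* s+r* t+s^2) (r^2* t+s* t) (r^2+s) (r* s+t) (r* t) r s t"
    "Mh r s t (-1) = mat3 0 1 0 0 0 1 (1/t) (-r/t) (-s/t)"
    "Mh r s t (-2) = mat3 0 0 1 (1/t) (-r/t) (-s/t) (-s/t^2) (1/t + r* s/t^2) (-r/t + s^2/t^2)"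
proof -
  have a: "Mh_nat r s t 0 = mat3 1 0 0 0 1 0 0 0 1" by (simp add: mat3_one)
  have b: "Mh_nat r s t 1 = mat3 r s t 1 0 0 0 1 0" by simp
  have c: "Mh_nat r s t 2 = mat3 (r^2 + s) (r* s + t) (r* t) r s t 1 0 0" by (simp add: numeral_2_eq_2)
  have d: "Mh_nat r s t 3 = r *\<^sub>R Mh_nat r s t 2 + s *\<^sub>R Mh_nat r s t 1 + t *\<^sub>R Mh_nat r s t 0"
    using Mh_nat.simps(4)[of r s t 0] by (simp add: numeral_3_eq_3 numeral_2_eq_2 del: Mh_nat.simps)
  have e: "Mh_neg r s t 1 = (1/t) *\<^sub>R (Mh_nat r s t 2 - r *\<^sub>R Mh_nat r s t 1 - s *\<^sub>R Mh_nat r s t 0)"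
    by (simp del: Mh_nat.simps)
  have f: "Mh_neg r s t 2 = (1/t) *\<^sub>R (Mh_nat r s t 1 - r *\<^sub>R Mh_nat r s t 0 - s *\<^sub>R Mh_neg r s t 1)"
    by (simp add: numeral_2_eq_2 del: Mh_nat.simps)
  have e': "Mh_neg r s t 1 = mat3 0 1 0 0 0 1 (1/t) (-r/t) (-s/t)"
    unfolding e a b c mat3_add mat3_diff mat3_scale mat3_eq using assms by (simp add: field_simps power2_eq_square)
  show "Mh r s t 0 = mat3 1 0 0 0 1 0 0 0 1" using a by (simp add: Mh_def)
  show "Mh r s t 1 = mat3 r s t 1 0 0 0 1 0" using b by (simp add: Mh_def del: Mh_nat.simps)
  show "Mh r s t 2 = mat3 (r^2 + s) (r* s + t) (r* t) r s t 1 0 0" using c by (simp add: Mh_def del: Mh_nat.simps)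
  show "Mh r s t 3 = mat3 (r^3+2* r* s+t) (r^2* s+r* t+s^2) (r^2* t+s* t) (r^2+s) (r* s+t) (r* t) r s t"
    using d unfolding a b c mat3_add mat3_scale by (simp add: Mh_def mat3_eq algebra_simps power2_eq_square power3_eq_cube del: Mh_nat.simps)
  show "Mh r s t (-1) = mat3 0 1 0 0 0 1 (1/t) (-r/t) (-s/t)" using e' by (simp add: Mh_def del: Mh_neg.simps)
  show "Mh r s t (-2) = mat3 0 0 1 (1/t) (-r/t) (-s/t) (-s/t^2) (1/t + r* s/t^2) (-r/t + s^2/t^2)"
    using f unfolding e' a b mat3_add mat3_diff mat3_scale using assms
    by (simp add: Mh_def mat3_eq field_simps power2_eq_square del: Mh_neg.simps Mh_nat.simps)
qed
lemma MH_vals: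
  "MH r s t a b c 0 =
     mat3 b (c - r*b) (t*a)
          a (b - r*a) (c - r*b - s*a)
          ((1/t) * (c - r*b - s*a)) (a - (r/t) * (c - r*b - s*a))
          ((1/t) * (- s*c + (t + r* s)*b + (s^2 - r*t)*a))"
  "MH r s t a b c 1 =
     mat3 c (s*b + t*a) (t*b)
          b (c - r*b) (t*a)
          a (b - r*a) (c - r*b - s*a)"
  "MH r s t a b c 2 =
     mat3 (r*c + s*b + t*a) (s*c + t*b) (t*c)
          c (s*b + t*a) (t*b)
          b (c - r*b) (t*a)"
  by (simp_all add: numeral_2_eq_2)

lemma base:
  assumes "t \<noteq> 0" and "n < 3"
  shows "MH r s t a b c n =
           b *\<^sub>R Mh r s t (int n) + (c - r*b) *\<^sub>R Mh r s t (int n - 1)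
           + (t*a) *\<^sub>R Mh r s t (int n - 2)
       \<and> MH r s t a b c n =
           a *\<^sub>R Mh r s t (int n + 1) + (b - r*a) *\<^sub>R Mh r s t (int n)
           + (c - r*b - s*a) *\<^sub>R Mh r s t (int n - 1)"
proof -
  have "n = 0 \<or> n = 1 \<or> n = 2" using assms(2) by auto
  moreover have "?thesis" if "n = 0"
    unfolding that MH_vals using assms(1)
    by (simp add: Mh_vals[OF assms(1)] mat3_add mat3_scale mat3_eq field_simps power2_eq_square power3_eq_cube del: MH.simps)
  moreover have "?thesis" if "n = 1"
    unfolding that MH_vals using assms(1)
    by (simp add: Mh_vals[OF assms(1)] mat3_add mat3_scale mat3_eq field_simps power2_eq_square power3_eq_cube del: MH.simps)
  moreover have "?thesis" if "n = 2"
    unfolding that MH_vals using assms(1)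
    by (simp add: Mh_vals[OF assms(1)] mat3_add mat3_scale mat3_eq field_simps power2_eq_square power3_eq_cube del: MH.simps)
  ultimately show ?thesis by blast
qed

theorem theorem3p2:
  fixes r s t a b c :: real and n :: nat
  assumes "t \<noteq> 0"
  shows "MH r s t a b c n =
           b *\<^sub>R Mh r s t (int n) + (c - r*b) *\<^sub>R Mh r s t (int n - 1)
           + (t*a) *\<^sub>R Mh r s t (int n - 2)
       \<and> MH r s t a b c n =
           a *\<^sub>R Mh r s t (int n + 1) + (b - r*a) *\<^sub>R Mh r s t (int n)
           + (c - r*b - s*a) *\<^sub>R Mh r s t (int n - 1)"
proof (induction n rule: less_induct)
  case (less n)
  show ?case
  proof (cases "n < 3")
    case True then show ?thesis using base assms by blast
  next
    case False
    define m where "m = n - 3"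
    have m: "n = Suc (Suc (Suc m))" using False unfolding m_def by arith
    have "m < n" "Suc m < n" "Suc (Suc m) < n" using m by simp_all
    note I0 = less.IH[OF this(1)] and I1 = less.IH[OF this(2)] and I2 = less.IH[OF this(3)]
    have R: "Mh r s t (int m + 3) = r *\<^sub>R Mh r s t (int m + 2) + s *\<^sub>R Mh r s t (int m + 1) + t *\<^sub>R Mh r s t (int m)"
         "Mh r s t (int m + 2) = r *\<^sub>R Mh r s t (int m + 1) + s *\<^sub>R Mh r s t (int m) + t *\<^sub>R Mh r s t (int m - 1)"
         "Mh r s t (int m + 1) = r *\<^sub>R Mh r s t (int m) + s *\<^sub>R Mh r s t (int m - 1) + t *\<^sub>R Mh r s t (int m - 2)"
         "Mh r s t (int m + 4) = r *\<^sub>R Mh r s t (int m + 3) + s *\<^sub>R Mh r s t (int m + 2) + t *\<^sub>R Mh r s t (int m + 1)"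
      using Mh_rec[OF assms, of r s "int m"] Mh_rec[OF assms, of r s "int m - 1"]
        Mh_rec[OF assms, of r s "int m - 2"] Mh_rec[OF assms, of r s "int m + 1"]
      by (simp_all add: algebra_simps)
    have e: "int (Suc m) = int m + 1" "int (Suc (Suc m)) = int m + 2" "int n = int m + 3"
      "int m + 2 - 1 = int m + 1" "int m + 2 - 2 = int m" "int m + 1 - 1 = int m" "int m + 1 - 2 = int m - 1"
      "int m + 3 - 1 = int m + 2" "int m + 3 - 2 = int m + 1" "int m + 3 + 1 = int m + 4"
      "int m + 2 + 1 = int m + 3" "int m + 1 + 1 = int m + 2"
      using m by auto
    have MHr: "MH r s t a b c n = r *\<^sub>R MH r s t a b c (Suc (Suc m)) + s *\<^sub>R MH r s t a b c (Suc m) + t *\<^sub>R MH r s t a b c m"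
      using m by simp
    let ?X3 = "Mh r s t (int m + 3)" let ?X2 = "Mh r s t (int m + 2)" let ?X1 = "Mh r s t (int m + 1)"
    let ?X0 = "Mh r s t (int m)" let ?Y1 = "Mh r s t (int m - 1)" let ?Y2 = "Mh r s t (int m - 2)"
    let ?X4 = "Mh r s t (int m + 4)"
    have A0: "MH r s t a b c m = b *\<^sub>R ?X0 + (c - r*b) *\<^sub>R ?Y1 + (t*a) *\<^sub>R ?Y2"
         "MH r s t a b c m = a *\<^sub>R ?X1 + (b - r*a) *\<^sub>R ?X0 + (c - r*b - s*a) *\<^sub>R ?Y1"
      using I0 by blast+
    have A1: "MH r s t a b c (Suc m) = b *\<^sub>R ?X1 + (c - r*b) *\<^sub>R ?X0 + (t*a) *\<^sub>R ?Y1"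
         "MH r s t a b c (Suc m) = a *\<^sub>R ?X2 + (b - r*a) *\<^sub>R ?X1 + (c - r*b - s*a) *\<^sub>R ?X0"
      using I1 unfolding e by blast+
    have A2: "MH r s t a b c (Suc (Suc m)) = b *\<^sub>R ?X2 + (c - r*b) *\<^sub>R ?X1 + (t*a) *\<^sub>R ?X0"
         "MH r s t a b c (Suc (Suc m)) = a *\<^sub>R ?X3 + (b - r*a) *\<^sub>R ?X2 + (c - r*b - s*a) *\<^sub>R ?X1"
      using I2 unfolding e by blast+
    have C1: "MH r s t a b c n = b *\<^sub>R (r *\<^sub>R ?X2 + s *\<^sub>R ?X1 + t *\<^sub>R ?X0)
       + (c - r*b) *\<^sub>R (r *\<^sub>R ?X1 + s *\<^sub>R ?X0 + t *\<^sub>R ?Y1) + (t*a) *\<^sub>R (r *\<^sub>R ?X0 + s *\<^sub>R ?Y1 + t *\<^sub>R ?Y2)"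
      using MHr unfolding A0(1) A1(1) A2(1) by (rule L1)
    have C2: "MH r s t a b c n = a *\<^sub>R (r *\<^sub>R ?X3 + s *\<^sub>R ?X2 + t *\<^sub>R ?X1)
       + (b - r*a) *\<^sub>R (r *\<^sub>R ?X2 + s *\<^sub>R ?X1 + t *\<^sub>R ?X0) + (c - r*b - s*a) *\<^sub>R (r *\<^sub>R ?X1 + s *\<^sub>R ?X0 + t *\<^sub>R ?Y1)"
      using MHr unfolding A0(2) A1(2) A2(2) by (rule L1)
    show ?thesis unfolding e using C1 C2 by (simp only: R[symmetric])
  qed
qed
end
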